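(* Let $\sigma$ be a permutation of $\mathbb{N}$ and let $\tilde\sigma$ be its extension to $\mathbb{Z}$ by the identity, i.e. $\tilde\sigma(k)=\sigma(k)$ for $k\in\mathbb{N}$ and $\tilde\sigma(k)=k$ otherwise. Then $$\mathrm{RW}(\tilde\sigma)=\mathrm{BST}(\sigma)\cup\bigcup_{k<0}\{1^k\}=\mathrm{BST}(\sigma)\cup\bigcup_{k\in\mathbb{N}}\{\Upsilon^k\},$$ and consequently $\mathrm{RW}(\tilde\sigma)\cap\mathbb{T}=\mathrm{BST}(\sigma)$.
   Context: $\mathbb{N}=\{1,2,\dots\}$. $\mathbb{T}$ is the set of finite words over $\{0,1\}$ with empty word $\varnothing$; $aS=\{aw:w\in S\}$. For a finite sequence $x=(x_1,\dots,x_m)$ of distinct numbers, $\mathrm{BST}(x)=\emptyset$ if $m=0$, else $\{\varnothing\}\cup0\,\mathrm{BST}(x_-)\cup1\,\mathrm{BST}(x_+)$, $x_-$ (resp. $x_+$) the subsequence of entries smaller (resp. larger) than $x_1$ in original order; for infinite $x$, $\mathrm{BST}(x)=\bigcup_m\mathrm{BST}(x_1,\dots,x_m)$; $\mathrm{BST}(\sigma)=\mathrm{BST}(\sigma(1),\sigma(2),\dots)$. Extended words: add a letter $\Upsilon$ with $1^k=1\cdots1$ ($k$ letters) for $k>0$, $1^0=\varnothing$, $1^k=\Upsilon^{|k|}$ for $k<0$. Redwood tree: an injective $\sigma:\mathbb{Z}\to\mathbb{Z}$ is admissible if $|\{i\in\mathbb{N}:\sigma(i)\notin\mathbb{N}\}|+|\{i\in\mathbb{Z}\setminus\mathbb{N}:\sigma(i)\in\mathbb{N}\}|<\infty$;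 a record index is $r$ with $\sigma(r)>\sigma(k)$ for all $k<r$; the standard record representation is the increasing enumeration $(r_k)_{k\in\mathbb{Z}}$ of record indices with $\sigma(r_0)\le0<\sigma(r_1)$; $\sigma[k]$ is the sequence of values $\sigma(i)$ with $\sigma(r_k)<\sigma(i)<\sigma(r_{k+1})$ in increasing order of $i$; $\mathrm{RW}(\sigma)=\bigcup_{k\in\mathbb{Z}}(\{1^k\}\cup1^k0\,\mathrm{BST}(\sigma[k]))$. *)

theory Defs
  imports Main
begin

datatype letter = L0 | L1 | Ups

type_synonym word = "letter list"

definition TT :: "word set" where
  "TT = {w. Ups \<notin> set w}"

definition one_pow :: "int \<Rightarrow> word" where
  "one_pow k = (if k \<ge> 0 then replicate (nat k) L1 else replicate (nat (- k)) Ups)"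

function bst :: "'a::linorder list \<Rightarrow> word set" where
  "bst [] = {}"
| "bst (x # xs) = insert [] ((Cons L0) ` bst (filter (\<lambda>y. y < x) xs)
                            \<union> (Cons L1) ` bst (filter (\<lambda>y. y > x) xs))"
  by pat_completeness auto
termination
  by (relation "measure length") (auto simp: le_imp_less_Suc)

text \<open>BST of an infinite sequence x_1, x_2, ... given by s (indices from 1).\<close>
definition bst_seq :: "(nat \<Rightarrow> 'a::linorder) \<Rightarrow> word set" where
  "bst_seq s = (\<Union>m. bst (map s [1..<m+1]))"

definition is_record :: "(int \<Rightarrow> int) \<Rightarrow> int \<Rightarrow> bool" where
  "is_record \<sigma> r \<longleftrightarrow> (\<forall>k<r. \<sigma> r > \<sigma> k)"

definition std_record_rep :: "(int \<Rightarrow> int) \<Rightarrow> (int \<Rightarrow> int) \<Rightarrow> bool" where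
  "std_record_rep \<sigma> r \<longleftrightarrow> strict_mono r \<and> range r = {i. is_record \<sigma> i}
      \<and> \<sigma> (r 0) \<le> 0 \<and> 0 < \<sigma> (r 1)"

definition rec_rep :: "(int \<Rightarrow> int) \<Rightarrow> int \<Rightarrow> int" where
  "rec_rep \<sigma> = (SOME r. std_record_rep \<sigma> r)"

definition gap_seq :: "(int \<Rightarrow> int) \<Rightarrow> int \<Rightarrow> int list" where
  "gap_seq \<sigma> k = (let r = rec_rep \<sigma> in
     map \<sigma> (sorted_list_of_set {i. \<sigma> (r k) < \<sigma> i \<and> \<sigma> i < \<sigma> (r (k+1))}))"

definition RW :: "(int \<Rightarrow> int) \<Rightarrow> word set" where
  "RW \<sigma> = (\<Union>k. {one_pow k} \<union> (\<lambda>w. one_pow k @ L0 # w) ` bst (gap_seq \<sigma> k))"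

text \<open>Extension of sigma : N -> N (N = {1,2,...}) to Z by the identity.\<close>
definition ext_id :: "(nat \<Rightarrow> nat) \<Rightarrow> int \<Rightarrow> int" where
  "ext_id \<sigma> k = (if k \<ge> 1 then int (\<sigma> (nat k)) else k)"

end

theory Submission
  imports Defs "HOL-Library.Sublist" "HOL-Library.Infinite_Set"
begin

fun rs :: "'a::linorder list \<Rightarrow> 'a list" where
  "rs [] = []"
| "rs (x # xs) = x # rs (filter (\<lambda>y. y > x) xs)"

definition cnd :: "'a::linorder list \<Rightarrow> nat \<Rightarrow> 'a \<Rightarrow> bool" where
  "cnd s j y = ((j = 0 \<or> s ! (j - 1) < y) \<and> y < s ! j)"

lemma bst_TT: "bst xs \<subseteq> TT"
  by (induction xs rule: bst.induct) (auto simp: TT_def)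

lemma bst_map:
  assumes "\<And>x y. f x < f y \<longleftrightarrow> x < y"
  shows "bst (map f xs) = bst xs"
proof (induction xs rule: bst.induct)
  case (2 x xs)
  have a: "filter (\<lambda>y. y < f x) (map f xs) = map f (filter (\<lambda>y. y < x) xs)"
    and b: "filter (\<lambda>y. y > f x) (map f xs) = map f (filter (\<lambda>y. y > x) xs)"
    by (simp_all add: filter_map o_def assms)
  show ?case using 2 by (simp add: a b)
qed simp

lemma bst_prefix: "prefix ys xs \<Longrightarrow> bst ys \<subseteq> bst xs"
proof (induction ys arbitrary: xs rule: bst.induct)
  case (2 y ys)
  then obtain xs' where xs: "xs = y # xs'" and p: "prefix ys xs'"
    by (cases xs) auto
  have "bst (filter (\<lambda>z. z < y) ys) \<subseteq> bst (filter (\<lambda>z. z < y) xs')"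
    "bst (filter (\<lambda>z. z > y) ys) \<subseteq> bst (filter (\<lambda>z. z > y) xs')"
    using 2 p filter_mono_prefix by blast+
  then show ?case using xs by auto
qed simp

lemma set_rs: "set (rs xs) \<subseteq> set xs"
  by (induction xs rule: rs.induct) auto

lemma rs_snoc: "rs (xs @ [y]) = (if \<forall>x\<in>set xs. x < y then rs xs @ [y] else rs xs)"
proof (induction xs rule: rs.induct)
  case (2 x xs)
  show ?case
  proof (cases "x < y")
    case True
    then show ?thesis using 2 by auto
  next
    case False
    then show ?thesis by auto
  qed
qed simp

lemma filter_cnd_Suc:
  assumes "j < length (rs (filter (\<lambda>y. y > x) xs))"
  shows "filter (cnd (x # rs (filter (\<lambda>y. y > x) xs)) (Suc j)) (x # xs)
       = filter (cnd (rs (filter (\<lambda>y. y > x) xs)) j) (filter (\<lambda>y. y > x) xs)"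
proof -
  let ?s = "rs (filter (\<lambda>y. y > x) xs)"
  have gt: "\<And>i. i < length ?s \<Longrightarrow> ?s ! i > x"
    using set_rs nth_mem by fastforce
  show ?thesis
    using gt[OF assms] gt[of "j-1"] assms
    by (cases j) (auto simp: cnd_def filter_filter intro!: filter_cong)
qed

lemma bst_char:
  "w \<in> bst xs \<longleftrightarrow> (\<exists>j<length (rs xs). w = replicate j L1 \<or>
      (\<exists>v. w = replicate j L1 @ L0 # v \<and> v \<in> bst (filter (cnd (rs xs) j) xs)))"
proof (induction xs arbitrary: w rule: bst.induct)
  case 1
  then show ?case by simp
next
  case (2 x xs)
  let ?R = "filter (\<lambda>y. y > x) xs"
  have c0: "filter (cnd (x # rs ?R) 0) (x # xs) = filter (\<lambda>y. y < x) xs"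
    by (auto simp: cnd_def intro!: filter_cong)
  show ?case
  proof
    assume "w \<in> bst (x # xs)"
    then consider "w = []" | v where "w = L0 # v" "v \<in> bst (filter (\<lambda>y. y < x) xs)"
      | u where "w = L1 # u" "u \<in> bst ?R" by auto
    then show "\<exists>j<length (rs (x # xs)). w = replicate j L1 \<or>
      (\<exists>v. w = replicate j L1 @ L0 # v \<and> v \<in> bst (filter (cnd (rs (x # xs)) j) (x # xs)))"
    proof cases
      case 1 then show ?thesis by (intro exI[of _ 0]) auto
    next
      case (2 v) then show ?thesis using c0 by (intro exI[of _ 0]) auto
    next
      case (3 u)
      then obtain j where j: "j < length (rs ?R)" and
        u: "u = replicate j L1 \<or> (\<exists>v. u = replicate j L1 @ L0 # v \<and> v \<in> bst (filter (cnd (rs ?R) j) ?R))"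
        using "2.IH"(2) by blast
      show ?thesis
        using j u 3 filter_cnd_Suc[OF j] by (intro exI[of _ "Suc j"]) auto
    qed
  next
    assume "\<exists>j<length (rs (x # xs)). w = replicate j L1 \<or>
      (\<exists>v. w = replicate j L1 @ L0 # v \<and> v \<in> bst (filter (cnd (rs (x # xs)) j) (x # xs)))"
    then obtain j where j: "j<length (rs (x # xs))" and w: "w = replicate j L1 \<or>
      (\<exists>v. w = replicate j L1 @ L0 # v \<and> v \<in> bst (filter (cnd (rs (x # xs)) j) (x # xs)))" by blast
    show "w \<in> bst (x # xs)"
    proof (cases j)
      case 0
      then show ?thesis using w c0 by auto
    next
      case (Suc j')
      then have j': "j' < length (rs ?R)" using j by simp
      have "tl w \<in> bst ?R" "w = L1 # tl w"
        using w filter_cnd_Suc[OF j'] "2.IH"(2)[of "tl w"] j' Suc by auto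
      then show ?thesis by (metis UnCI bst.simps(2) image_eqI insertCI)
    qed
  qed
qed

locale SS =
  fixes \<sigma> :: "nat \<Rightarrow> nat"
  assumes bij: "bij_betw \<sigma> {1..} {1..}"
begin

abbreviation \<tau> where "\<tau> \<equiv> ext_id \<sigma>"

lemma pos: "n \<ge> 1 \<Longrightarrow> \<sigma> n \<ge> 1"
  using bij by (auto simp: bij_betw_def)

lemma injs: "inj_on \<sigma> {1..}"
  using bij by (auto simp: bij_betw_def)

lemma surjs: "m \<ge> 1 \<Longrightarrow> \<exists>n\<ge>1. \<sigma> n = m"
proof -
  assume "m \<ge> 1"
  then have "m \<in> \<sigma> ` {1..}" using bij by (simp add: bij_betw_def)
  then show ?thesis by auto
qed

lemma tau_le0: "\<tau> i \<le> 0 \<longleftrightarrow> i \<le> 0"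
proof (cases "i \<ge> 1")
  case True
  then have "nat i \<ge> 1" by simp
  then have "\<sigma> (nat i) \<ge> 1" by (rule pos)
  then show ?thesis using True by (simp add: ext_id_def)
qed (simp add: ext_id_def)

lemma tau_pos: "i \<ge> 1 \<Longrightarrow> \<tau> i = int (\<sigma> (nat i))"
  by (simp add: ext_id_def)

lemma tau_nat: "n \<ge> 1 \<Longrightarrow> \<tau> (int n) = int (\<sigma> n)"
  by (simp add: ext_id_def)

lemma tau_inj: "inj \<tau>"
proof (rule injI)
  fix a b assume e: "\<tau> a = \<tau> b"
  show "a = b"
  proof (cases "a \<ge> 1")
    case True
    then have "b \<ge> 1" using e tau_le0[of a] tau_le0[of b] by linarith
    then have "\<sigma> (nat a) = \<sigma> (nat b)" using True e by (simp add: ext_id_def)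
    then have "nat a = nat b" using inj_onD[OF injs, of "nat a" "nat b"] True \<open>b \<ge> 1\<close> by simp
    then show ?thesis using True \<open>b \<ge> 1\<close> by simp
  next
    case False
    then have "b \<le> 0" using e tau_le0[of a] tau_le0[of b] by linarith
    then show ?thesis using False e by (auto simp: ext_id_def)
  qed
qed

lemma rec_nonpos: "i \<le> 0 \<Longrightarrow> is_record \<tau> i"
  by (auto simp: is_record_def ext_id_def)

lemma rec_pos: "n \<ge> 1 \<Longrightarrow> is_record \<tau> (int n) \<longleftrightarrow> (\<forall>j\<in>{1..<n}. \<sigma> j < \<sigma> n)"
proof
  assume n: "n \<ge> 1" and r: "is_record \<tau> (int n)"
  show "\<forall>j\<in>{1..<n}. \<sigma> j < \<sigma> n"
  proof
    fix j assume "j \<in> {1..<n}"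
    then show "\<sigma> j < \<sigma> n" using r n unfolding is_record_def
      by (auto simp: ext_id_def dest!: spec[of _ "int j"])
  qed
next
  assume n: "n \<ge> 1" and h: "\<forall>j\<in>{1..<n}. \<sigma> j < \<sigma> n"
  show "is_record \<tau> (int n)" unfolding is_record_def
  proof (intro allI impI)
    fix k assume k: "k < int n"
    show "\<tau> k < \<tau> (int n)"
    proof (cases "k \<ge> 1")
      case True
      then have "nat k \<in> {1..<n}" using k by auto
      then have "\<sigma> (nat k) < \<sigma> n" using h by blast
      then show ?thesis using True k n by (simp add: ext_id_def)
    next
      case False
      then show ?thesis using n pos[of n] by (auto simp: ext_id_def)
    qed
  qed
qed

lemma rec_mono: "is_record \<tau> b \<Longrightarrow> a < b \<Longrightarrow> \<tau> a < \<tau> b"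
  by (simp add: is_record_def)

definition P where "P = {n::nat. n \<ge> 1 \<and> is_record \<tau> (int n)}"

lemma inf_rec: "infinite P"
  unfolding infinite_nat_iff_unbounded
proof
  fix M :: nat
  define V where "V = Max (\<sigma> ` {1..M})"
  obtain N where N: "N \<ge> 1" "\<sigma> N = V + 1" using surjs[of "V+1"] by auto
  have fin: "finite (\<sigma> ` {1..N})" by simp
  have ne: "\<sigma> ` {1..N} \<noteq> {}" using N by auto
  obtain i where i: "i \<in> {1..N}" "\<sigma> i = Max (\<sigma> ` {1..N})"
    using Max_in[OF fin ne] by auto
  have mx: "\<And>j. j \<in> {1..N} \<Longrightarrow> \<sigma> j \<le> \<sigma> i" using i fin by simp
  have "\<forall>j\<in>{1..<i}. \<sigma> j < \<sigma> i"
  proof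
    fix j assume j: "j \<in> {1..<i}"
    then have "\<sigma> j \<le> \<sigma> i" using mx i by auto
    moreover have "\<sigma> j \<noteq> \<sigma> i"
    proof
      assume "\<sigma> j = \<sigma> i"
      then have "j = i" using inj_onD[OF injs, of j i] j i by auto
      then show False using j by auto
    qed
    ultimately show "\<sigma> j < \<sigma> i" by simp
  qed
  then have "i \<in> P" using rec_pos[of i] i by (auto simp: P_def)
  moreover have "i > M"
  proof (rule ccontr)
    assume "\<not> i > M"
    then have "i \<in> {1..M}" using i by auto
    then have "\<sigma> i \<in> \<sigma> ` {1..M}" by blast
    then have "\<sigma> i \<le> V" unfolding V_def by (intro Max_ge) auto
    moreover have "\<sigma> N \<le> \<sigma> i" using mx[of N] N(1) by simp
    ultimately show False using N by simp
  qed
  ultimately show "\<exists>n>M. n \<in> P" by blast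
qed

lemma P_pos: "n \<in> P \<Longrightarrow> n \<ge> 1" by (simp add: P_def)

definition r0 :: "int \<Rightarrow> int" where
  "r0 k = (if k \<le> 0 then k else int (enumerate P (nat k - 1)))"

lemma std_ex: "std_record_rep \<tau> r0"
  unfolding std_record_rep_def
proof (intro conjI)
  have e1: "\<And>n. enumerate P n \<ge> 1" using enumerate_in_set[OF inf_rec] P_pos by blast
  show "strict_mono r0"
  proof (rule strict_monoI)
    fix a b :: int assume ab: "a < b"
    show "r0 a < r0 b"
    proof (cases "b \<le> 0")
      case True then show ?thesis using ab by (simp add: r0_def)
    next
      case False
      show ?thesis
      proof (cases "a \<le> 0")
        case True then show ?thesis using False e1[of "nat b - 1"] by (simp add: r0_def)
      next
        case False
        then show ?thesis using \<open>\<not> b \<le> 0\<close> ab inf_rec by (simp add: r0_def)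
      qed
    qed
  qed
  show "range r0 = {i. is_record \<tau> i}"
  proof
    show "range r0 \<subseteq> {i. is_record \<tau> i}"
      using rec_nonpos enumerate_in_set[OF inf_rec] by (auto simp: r0_def P_def)
    show "{i. is_record \<tau> i} \<subseteq> range r0"
    proof
      fix i assume i: "i \<in> {i. is_record \<tau> i}"
      show "i \<in> range r0"
      proof (cases "i \<le> 0")
        case True then show ?thesis by (metis r0_def rangeI)
      next
        case False
        then have "nat i \<in> P" using i by (auto simp: P_def)
        then obtain n where n: "enumerate P n = nat i" using enumerate_Ex[OF inf_rec] by blast
        have "nat (int n + 1) - 1 = n" by simp
        then have "r0 (int n + 1) = i" using n False by (simp add: r0_def)
        then show ?thesis by (metis rangeI)
      qed
    qed
  qed
  show "\<tau> (r0 0) \<le> 0" by (simp add: r0_def ext_id_def)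
  show "0 < \<tau> (r0 1)" using tau_le0[of "r0 1"] e1[of 0] by (simp add: r0_def)
qed

abbreviation r where "r \<equiv> rec_rep \<tau>"

lemma std: "std_record_rep \<tau> r"
  unfolding rec_rep_def by (rule someI[where P="std_record_rep \<tau>", OF std_ex])

lemma r_sm: "strict_mono r" using std by (simp add: std_record_rep_def)
lemma r_rec: "is_record \<tau> (r k)" using std by (force simp: std_record_rep_def)
lemma r_all: "is_record \<tau> i \<Longrightarrow> \<exists>k. i = r k"
  using std by (auto simp: std_record_rep_def)
lemma r_0: "\<tau> (r 0) \<le> 0" using std by (simp add: std_record_rep_def)
lemma r_1: "0 < \<tau> (r 1)" using std by (simp add: std_record_rep_def)

lemma tr_less: "\<tau> (r a) < \<tau> (r b) \<longleftrightarrow> a < b"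
proof
  assume "a < b" then show "\<tau> (r a) < \<tau> (r b)"
    using r_sm r_rec rec_mono strict_monoD by blast
next
  assume h: "\<tau> (r a) < \<tau> (r b)"
  show "a < b"
  proof (rule ccontr)
    assume "\<not> a < b"
    then have "b = a \<or> b < a" by auto
    then show False using h r_sm r_rec rec_mono strict_monoD
      by (metis less_asym less_irrefl)
  qed
qed

lemma r_less: "r a < r b \<longleftrightarrow> a < b"
  using r_sm strict_mono_less by blast

lemma r_pos: "k \<ge> 1 \<Longrightarrow> r k \<ge> 1"
proof -
  assume k: "k \<ge> 1"
  have "r 1 \<ge> 1" using r_1 tau_le0[of "r 1"] by linarith
  moreover have "r 1 \<le> r k" using k r_less[of k 1] by linarith
  ultimately show ?thesis by simp
qed

definition G where "G k = {i. \<tau> (r k) < \<tau> i \<and> \<tau> i < \<tau> (r (k+1))}"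

lemma G_nonrec: "i \<in> G k \<Longrightarrow> \<not> is_record \<tau> i"
proof
  assume "i \<in> G k" "is_record \<tau> i"
  then obtain m where "i = r m" "\<tau> (r k) < \<tau> (r m)" "\<tau> (r m) < \<tau> (r (k+1))"
    using r_all G_def by auto
  then show False using tr_less by auto
qed

lemma G_pos: "i \<in> G k \<Longrightarrow> i \<ge> 1"
proof (rule ccontr)
  assume "i \<in> G k" "\<not> i \<ge> 1"
  then have "\<not> is_record \<tau> i" "i \<le> 0" using G_nonrec by auto
  then show False using rec_nonpos by blast
qed

lemma G_neg: "k < 0 \<Longrightarrow> G k = {}"
proof (rule ccontr)
  assume k: "k < 0" and "G k \<noteq> {}"
  then obtain i where i: "i \<in> G k" by auto
  have "\<tau> (r (k+1)) \<le> \<tau> (r 0)" using k tr_less[of 0 "k+1"] by linarith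
  then have "\<tau> i \<le> 0" using i r_0 by (simp add: G_def)
  then show False using i G_pos tau_le0 by fastforce
qed

lemma G_fin: "finite (G k)"
proof -
  have "G k \<subseteq> \<tau> -` {\<tau> (r k)<..<\<tau> (r (k+1))}" by (auto simp: G_def)
  moreover have "finite (\<tau> -` {\<tau> (r k)<..<\<tau> (r (k+1))})"
    using tau_inj by (intro finite_vimageI) auto
  ultimately show ?thesis by (rule finite_subset)
qed

lemma gap_eq: "gap_seq \<tau> k = map \<tau> (sorted_list_of_set (G k))"
  by (simp add: gap_seq_def G_def Let_def)

definition xs :: "nat \<Rightarrow> nat list" where "xs m = map \<sigma> [1..<m+1]"

lemma inv: "\<exists>t::nat. rs (xs m) = map (\<lambda>j. \<sigma> (nat (r (int j)))) [1..<t+1]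
   \<and> r (int t) \<le> int m \<and> int m < r (int t + 1)"
proof (induction m)
  case 0
  have "r 0 \<le> 0" using r_0 tau_le0 by blast
  then show ?case using r_pos[of 1] by (intro exI[of _ 0]) (simp add: xs_def)
next
  case (Suc m)
  then obtain t where t: "rs (xs m) = map (\<lambda>j. \<sigma> (nat (r (int j)))) [1..<t+1]"
    "r (int t) \<le> int m" "int m < r (int t + 1)" by blast
  have xsS: "xs (Suc m) = xs m @ [\<sigma> (Suc m)]" by (simp add: xs_def)
  have rc: "(\<forall>x\<in>set (xs m). x < \<sigma> (Suc m)) \<longleftrightarrow> is_record \<tau> (int (Suc m))"
    using rec_pos[of "Suc m"] by (auto simp: xs_def)
  show ?case
  proof (cases "r (int t + 1) = int (Suc m)")
    case True
    then have "is_record \<tau> (int (Suc m))" using r_rec by metis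
    then have "rs (xs (Suc m)) = rs (xs m) @ [\<sigma> (Suc m)]"
      unfolding xsS rs_snoc using rc by simp
    moreover have "[1..<Suc t+1] = [1..<t+1] @ [Suc t]" by simp
    moreover have "\<sigma> (nat (r (int (Suc t)))) = \<sigma> (Suc m)" using True
      by (metis nat_int of_nat_Suc add.commute)
    ultimately have "rs (xs (Suc m)) = map (\<lambda>j. \<sigma> (nat (r (int j)))) [1..<Suc t+1]"
      using t(1) by (simp del: upt_Suc)
    moreover have "int (Suc m) < r (int (Suc t) + 1)"
      using True r_less[of "int t + 1" "int t + 2"] by (simp add: add.commute)
    moreover have "r (int (Suc t)) \<le> int (Suc m)" proof - have "int (Suc t) = int t + 1" by simp then show ?thesis using True by (simp only:) qed
    ultimately show ?thesis by blast
  next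
    case False
    then have lt: "int (Suc m) < r (int t + 1)" using t by simp
    have "\<not> is_record \<tau> (int (Suc m))"
    proof
      assume "is_record \<tau> (int (Suc m))"
      then obtain k where k: "int (Suc m) = r k" using r_all by blast
      have "r (int t) < r k" using t(2) k by linarith
      then have a: "int t < k" using r_less by blast
      have "r k < r (int t + 1)" using lt k by simp
      then have "k < int t + 1" using r_less by blast
      then have "int t < k" "k < int t + 1" using a by auto
      then show False by simp
    qed
    then have "rs (xs (Suc m)) = rs (xs m)"
      unfolding xsS rs_snoc using rc by simp
    moreover have "r (int t) \<le> int (Suc m)" using t(2) by simp
    ultimately show ?thesis using t(1) lt by (intro exI[of _ t] conjI) (simp_all only:)
  qed
qed


declare upt_Suc [simp del]

lemma FL:
  assumes t: "rs (xs m) = map (\<lambda>j. \<sigma> (nat (r (int j)))) [1..<t+1]" and j: "j < t"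
  shows "map int (filter (cnd (rs (xs m)) j) (xs m))
       = map \<tau> (filter (\<lambda>i. i \<in> G (int j)) (map int [1..<m+1]))"
proof -
  define L where "L = [1..<m+1]"
  have "rs (xs m) ! j = \<sigma> (nat (r (int (Suc j))))" using t j by (simp del: upt_Suc)
  then have rj: "rs (xs m) ! j = \<sigma> (nat (r (int j + 1)))" by (simp only: of_nat_Suc add.commute)
  have rj1: "rs (xs m) ! (j - 1) = \<sigma> (nat (r (int j)))" if jp: "j > 0"
  proof -
    have "[1..<t+1] ! (j-1) = j" using jp j nth_upt[of 1 "j-1" "t+1"] by simp
    then show ?thesis using t j by (simp del: upt_Suc)
  qed
  have tj1: "\<tau> (r (int j + 1)) = int (\<sigma> (nat (r (int j + 1))))"
    using r_pos[of "int j + 1"] tau_pos by simp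
  have tj: "j > 0 \<Longrightarrow> \<tau> (r (int j)) = int (\<sigma> (nat (r (int j))))"
    using r_pos[of "int j"] tau_pos by simp
  have c: "cnd (rs (xs m)) j (\<sigma> n) \<longleftrightarrow> int n \<in> G (int j)" if n: "n \<in> set L" for n
  proof -
    have n1: "n \<ge> 1" using n by (simp add: L_def)
    have tn: "\<tau> (int n) = int (\<sigma> n)" using tau_nat[OF n1] .
    have sp: "\<sigma> n \<ge> 1" using pos[OF n1] .
    show ?thesis
    proof (cases "j = 0")
      case True
      have "\<tau> (r 0) < int (\<sigma> n)" using r_0 sp by linarith
      then show ?thesis using True rj tj1 tn by (simp add: cnd_def G_def)
    next
      case False
      then show ?thesis using rj rj1 tj tj1 tn by (simp add: cnd_def G_def)
    qed
  qed
  have "map int (filter (cnd (rs (xs m)) j) (xs m)) = map (int \<circ> \<sigma>) (filter (\<lambda>n. cnd (rs (xs m)) j (\<sigma> n)) L)"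
    by (simp add: xs_def L_def filter_map o_def)
  also have "filter (\<lambda>n. cnd (rs (xs m)) j (\<sigma> n)) L = filter (\<lambda>n. int n \<in> G (int j)) L"
    using c by (intro filter_cong) auto
  also have "map (int \<circ> \<sigma>) (filter (\<lambda>n. int n \<in> G (int j)) L) = map (\<tau> \<circ> int) (filter (\<lambda>n. int n \<in> G (int j)) L)"
  proof (intro map_cong refl)
    fix n assume "n \<in> set (filter (\<lambda>n. int n \<in> G (int j)) L)"
    then have "n \<ge> 1" by (simp add: L_def del: upt_Suc)
    then show "(int \<circ> \<sigma>) n = (\<tau> \<circ> int) n" by (simp add: tau_nat)
  qed
  also have "\<dots> = map \<tau> (filter (\<lambda>i. i \<in> G (int j)) (map int [1..<m+1]))"
    by (simp add: L_def filter_map o_def)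
  finally show ?thesis .
qed

lemma sortedG:
  assumes "G k \<subseteq> {1..int M}"
  shows "sorted_list_of_set (G k) = filter (\<lambda>i. i \<in> G k) (map int [1..<M+1])"
proof -
  let ?l = "filter (\<lambda>i. i \<in> G k) (map int [1..<M+1])"
  have s: "set ?l = G k"
  proof
    show "set ?l \<subseteq> G k" by auto
    show "G k \<subseteq> set ?l"
    proof
      fix i assume i: "i \<in> G k"
      then have "1 \<le> i" "i \<le> int M" using assms by auto
      then have "nat i \<in> set [1..<M+1]" "i = int (nat i)" by auto
      then have "i \<in> set (map int [1..<M+1])" by (metis imageI list.set_map)
      then show "i \<in> set ?l" using i by (simp del: upt_Suc)
    qed
  qed
  have so: "sorted (map int [1..<M+1])" by (simp add: sorted_map del: upt_Suc)
  have "sorted ?l" using sorted_wrt_filter[OF so] by blast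
  moreover have "distinct ?l" by (simp add: distinct_map del: upt_Suc)
  ultimately have so2: "sorted ?l" "distinct ?l" by blast+
  have "sorted_list_of_set (G k) = sorted_list_of_set (set ?l)" using s by simp
  also have "\<dots> = sort (remdups ?l)" by (rule sorted_list_of_set_sort_remdups)
  also have "\<dots> = ?l" using so2 by (simp only: distinct_remdups_id sorted_sort_id)
  finally show ?thesis .
qed

lemma bound: "\<exists>M. G k \<subseteq> {1..int M}"
proof -
  have "\<forall>i\<in>G k. i \<le> Max (G k)"
  proof
    fix i assume "i \<in> G k"
    then show "i \<le> Max (G k)" using Max_ge[OF G_fin] by blast
  qed
  moreover have "Max (G k) \<le> int (nat (Max (G k)))" by simp
  ultimately have bnd: "\<forall>i\<in>G k. i \<le> int (nat (Max (G k)))" by fastforce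
  have "G k \<subseteq> {1..int (nat (Max (G k)))}"
  proof
    fix i assume i: "i \<in> G k"
    show "i \<in> {1..int (nat (Max (G k)))}"
      unfolding atLeastAtMost_iff using G_pos[OF i] bnd i by blast
  qed
  then show ?thesis by blast
qed

lemma bst_int: "bst (map int ys) = bst ys"
  by (rule bst_map) simp

lemma bst_seq_eq: "bst_seq \<sigma> = (\<Union>m. bst (xs m))"
  by (simp add: bst_seq_def xs_def)

lemma t_big:
  assumes "r (int t) \<le> int m" "int m < r (int t + 1)" "r (int j + 1) \<le> int m"
  shows "j < t"
proof -
  have "r (int j + 1) < r (int t + 1)" using assms by linarith
  then show ?thesis using r_less by simp
qed

lemma KA: "replicate j L1 \<in> bst_seq \<sigma>"
proof -
  define m where "m = nat (r (int j + 1))"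
  have m: "int m = r (int j + 1)" using r_pos[of "int j + 1"] by (simp add: m_def)
  obtain t where t: "rs (xs m) = map (\<lambda>j. \<sigma> (nat (r (int j)))) [1..<t+1]"
    "r (int t) \<le> int m" "int m < r (int t + 1)" using inv by blast
  have "j < t" using t_big[OF t(2,3)] m by simp
  moreover have len: "length (rs (xs m)) = t" using t(1) by (simp del: upt_Suc)
  ultimately have "replicate j L1 \<in> bst (xs m)"
    by (intro bst_char[of _ "xs m", THEN iffD2]) auto
  then show ?thesis using bst_seq_eq by blast
qed

lemma KB: "v \<in> bst (gap_seq \<tau> (int j)) \<Longrightarrow> replicate j L1 @ L0 # v \<in> bst_seq \<sigma>"
proof -
  assume v: "v \<in> bst (gap_seq \<tau> (int j))"
  obtain M where M: "G (int j) \<subseteq> {1..int M}" using bound by blast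
  define m where "m = max M (nat (r (int j + 1)))"
  have m1: "r (int j + 1) \<le> int m"
    using r_pos[of "int j + 1"] by (auto simp: m_def)
  have "{1..int M} \<subseteq> {1..int m}" by (auto simp: m_def)
  then have m: "r (int j + 1) \<le> int m" "G (int j) \<subseteq> {1..int m}" using M m1 by auto
  obtain t where t: "rs (xs m) = map (\<lambda>j. \<sigma> (nat (r (int j)))) [1..<t+1]"
    "r (int t) \<le> int m" "int m < r (int t + 1)" using inv by blast
  have jt: "j < t" using t_big[OF t(2,3) m(1)] .
  have "gap_seq \<tau> (int j) = map int (filter (cnd (rs (xs m)) j) (xs m))"
    by (simp only: gap_eq sortedG[OF m(2)] FL[OF t(1) jt])
  then have "v \<in> bst (filter (cnd (rs (xs m)) j) (xs m))" using v bst_int by simp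
  moreover have len: "length (rs (xs m)) = t" using t(1) by (simp del: upt_Suc)
  ultimately have "replicate j L1 @ L0 # v \<in> bst (xs m)"
    using jt by (intro bst_char[of _ "xs m", THEN iffD2]) blast
  then show ?thesis using bst_seq_eq by blast
qed

lemma KC:
  assumes w: "w \<in> bst (xs m)"
  shows "(\<exists>j. w = replicate j L1) \<or> (\<exists>j v. w = replicate j L1 @ L0 # v \<and> v \<in> bst (gap_seq \<tau> (int j)))"
proof -
  obtain t where t: "rs (xs m) = map (\<lambda>j. \<sigma> (nat (r (int j)))) [1..<t+1]"
    "r (int t) \<le> int m" "int m < r (int t + 1)" using inv by blast
  have len: "length (rs (xs m)) = t" using t(1) by (simp del: upt_Suc)
  obtain j where j: "j < t" and wj: "w = replicate j L1 \<or>
      (\<exists>v. w = replicate j L1 @ L0 # v \<and> v \<in> bst (filter (cnd (rs (xs m)) j) (xs m)))"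
    using bst_char[of w "xs m", THEN iffD1, OF w] unfolding len by blast
  show ?thesis
  proof (cases "w = replicate j L1")
    case True then show ?thesis by blast
  next
    case False
    then obtain v where v: "w = replicate j L1 @ L0 # v" "v \<in> bst (filter (cnd (rs (xs m)) j) (xs m))"
      using wj by blast
    obtain M where M: "G (int j) \<subseteq> {1..int M}" using bound by blast
    define m' where "m' = max m M"
    have "{1..int M} \<subseteq> {1..int m'}" by (auto simp: m'_def)
    then have M': "G (int j) \<subseteq> {1..int m'}" using M by auto
    have "m' + 1 = (m + 1) + (m' - m)" by (simp add: m'_def)
    then have "[1..<m'+1] = [1..<m+1] @ [m+1..<m'+1]"
      using upt_add_eq_append[of 1 "m+1" "m' - m"] by (simp only:)
    then have pre: "prefix (map int [1..<m+1]) (map int [1..<m'+1])"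
      by (metis map_append prefixI)
    have p: "prefix (map \<tau> (filter (\<lambda>i. i \<in> G (int j)) (map int [1..<m+1])))
                      (map \<tau> (filter (\<lambda>i. i \<in> G (int j)) (map int [1..<m'+1])))"
      by (rule map_mono_prefix[OF filter_mono_prefix[OF pre]])
    have "bst (map \<tau> (filter (\<lambda>i. i \<in> G (int j)) (map int [1..<m+1])))
        = bst (filter (cnd (rs (xs m)) j) (xs m))"
      by (simp only: FL[OF t(1) j, symmetric] bst_int)
    then have "v \<in> bst (map \<tau> (filter (\<lambda>i. i \<in> G (int j)) (map int [1..<m+1])))"
      using v(2) by simp
    then have "v \<in> bst (gap_seq \<tau> (int j))"
      using bst_prefix[OF p] gap_eq sortedG[OF M'] by auto
    then show ?thesis using v(1) by blast
  qed
qed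

lemma main1: "RW \<tau> = bst_seq \<sigma> \<union> (\<Union>k\<in>{k::int. k < 0}. {one_pow k})"
proof
  show "RW \<tau> \<subseteq> bst_seq \<sigma> \<union> (\<Union>k\<in>{k::int. k < 0}. {one_pow k})"
  proof
    fix x assume "x \<in> RW \<tau>"
    then obtain k where k: "x = one_pow k \<or> (\<exists>v\<in>bst (gap_seq \<tau> k). x = one_pow k @ L0 # v)"
      by (auto simp: RW_def)
    show "x \<in> bst_seq \<sigma> \<union> (\<Union>k\<in>{k::int. k < 0}. {one_pow k})"
    proof (cases "k < 0")
      case True
      then have "gap_seq \<tau> k = []" using gap_eq G_neg by simp
      then show ?thesis using k True by auto
    next
      case False
      then have kk: "k = int (nat k)" by simp
      have op: "one_pow k = replicate (nat k) L1" using False by (simp add: one_pow_def)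
      have "x \<in> bst_seq \<sigma>"
      proof (cases "x = one_pow k")
        case True then show ?thesis using op KA by simp
      next
        case False
        then obtain v where v: "v \<in> bst (gap_seq \<tau> (int (nat k)))" "x = replicate (nat k) L1 @ L0 # v"
          using k op kk by auto
        then show ?thesis using KB by simp
      qed
      then show ?thesis by blast
    qed
  qed
  show "bst_seq \<sigma> \<union> (\<Union>k\<in>{k::int. k < 0}. {one_pow k}) \<subseteq> RW \<tau>"
  proof
    fix x assume x: "x \<in> bst_seq \<sigma> \<union> (\<Union>k\<in>{k::int. k < 0}. {one_pow k})"
    show "x \<in> RW \<tau>"
    proof (cases "x \<in> bst_seq \<sigma>")
      case True
      then obtain m where "x \<in> bst (xs m)" using bst_seq_eq by blast
      then have "(\<exists>j. x = replicate j L1) \<or> (\<exists>j v. x = replicate j L1 @ L0 # v \<and> v \<in> bst (gap_seq \<tau> (int j)))"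
        by (rule KC)
      moreover have "\<And>j. one_pow (int j) = replicate j L1" by (simp add: one_pow_def)
      ultimately show ?thesis
      proof (elim disjE exE conjE)
        fix j assume "x = replicate j L1" "\<And>j. one_pow (int j) = replicate j L1"
        then have "x = one_pow (int j)" by simp
        then show ?thesis unfolding RW_def by blast
      next
        fix j v assume "x = replicate j L1 @ L0 # v" "v \<in> bst (gap_seq \<tau> (int j))"
           "\<And>j. one_pow (int j) = replicate j L1"
        then have "x \<in> (\<lambda>w. one_pow (int j) @ L0 # w) ` bst (gap_seq \<tau> (int j))" by simp
        then show ?thesis unfolding RW_def by blast
      qed
    next
      case False
      then show ?thesis using x by (auto simp: RW_def)
    qed
  qed
qed


end


theorem lemma2p4:
  fixes \<sigma> :: "nat \<Rightarrow> nat"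
  assumes "bij_betw \<sigma> {1..} {1..}"
  shows "RW (ext_id \<sigma>) = bst_seq \<sigma> \<union> (\<Union>k\<in>{k::int. k < 0}. {one_pow k})
       \<and> RW (ext_id \<sigma>) = bst_seq \<sigma> \<union> (\<Union>k\<in>{1::nat..}. {replicate k Ups})
       \<and> RW (ext_id \<sigma>) \<inter> TT = bst_seq \<sigma>"
proof -
  interpret SS \<sigma> using assms by unfold_locales
  have m1: "RW (ext_id \<sigma>) = bst_seq \<sigma> \<union> (\<Union>k\<in>{k::int. k < 0}. {one_pow k})"
    by (rule main1)
  have e: "(\<Union>k\<in>{k::int. k < 0}. {one_pow k}) = (\<Union>k\<in>{1::nat..}. {replicate k Ups})"
  proof
    show "(\<Union>k\<in>{k::int. k < 0}. {one_pow k}) \<subseteq> (\<Union>k\<in>{1::nat..}. {replicate k Ups})"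
    proof
      fix x assume "x \<in> (\<Union>k\<in>{k::int. k < 0}. {one_pow k})"
      then obtain k :: int where k: "k < 0" "x = one_pow k" by auto
      then have "x = replicate (nat (- k)) Ups" "nat (- k) \<ge> 1" by (auto simp: one_pow_def)
      then show "x \<in> (\<Union>k\<in>{1::nat..}. {replicate k Ups})" by auto
    qed
    show "(\<Union>k\<in>{1::nat..}. {replicate k Ups}) \<subseteq> (\<Union>k\<in>{k::int. k < 0}. {one_pow k})"
    proof
      fix x assume "x \<in> (\<Union>k\<in>{1::nat..}. {replicate k Ups})"
      then obtain n :: nat where n: "n \<ge> 1" "x = replicate n Ups" by auto
      then have "x = one_pow (- int n)" "- int n < 0" by (auto simp: one_pow_def)
      then show "x \<in> (\<Union>k\<in>{k::int. k < 0}. {one_pow k})" by blast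
    qed
  qed
  have bT: "bst_seq \<sigma> \<subseteq> TT"
    unfolding bst_seq_def using bst_TT by blast
  have uT: "(\<Union>k\<in>{1::nat..}. {replicate k Ups}) \<inter> TT = {}"
    by (auto simp: TT_def)
  show ?thesis using m1 e bT uT by blast
qed

end
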